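(* Let $a>0$, $\tau>0$ with $\tau\le a$. Then every eigenvalue $\lambda\in\mathbb{C}$ of $\mathcal{A}$ satisfies $\Re\lambda<0$.
   Context: Let $H_1$ and $H$ be Hilbert spaces, let $B:D(B)\subset H_1\to H$ be a linear unbounded operator and $B^*:D(B^* )\subset H\to H_1$ its adjoint. Assume there is $C>0$ with $\|B^*v\|_{H_1}\ge C\|v\|_H$ for all $v\in D(B^* )$, that $V:=D(B^* )$ is complete for the norm $\|B^*v\|_{H_1}$, and that $V$ is compactly embedded into $H$. Let $\mathcal{H}:=D(B^* )\times H\times L^2(0,1;H_1)$. Define $\mathcal{A}(u,v,z)=\big(v,\,-B(aB^*v+z(1)),\,-\tau^{-1}z_\rho\big)$ with domain $D(\mathcal{A})=\{(u,v,z)\in D(B^* )\times D(B^* )\times H^1(0,1;H_1):\ aB^*v+z(1)\in D(B),\ B^*u=z(0)\}$. *)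

theory Defs
  imports "HOL-Analysis.Analysis"
begin

text \<open>Real Hilbert spaces are types of class real_inner and complete_space.
  An unbounded operator B with domain DB is a function on the whole type
  whose values are only relevant on DB.\<close>

definition lin_op :: "'a::real_vector set \<Rightarrow> ('a \<Rightarrow> 'b::real_vector) \<Rightarrow> bool" where
  "lin_op D T \<longleftrightarrow> subspace D \<and>
     (\<forall>x\<in>D. \<forall>y\<in>D. T (x + y) = T x + T y) \<and>
     (\<forall>c. \<forall>x\<in>D. T (c *\<^sub>R x) = c *\<^sub>R T x)"

definition is_adjoint ::
  "'a::real_inner set \<Rightarrow> ('a \<Rightarrow> 'b::real_inner) \<Rightarrow> 'b set \<Rightarrow> ('b \<Rightarrow> 'a) \<Rightarrow> bool" where
  "is_adjoint DB B DBs Bs \<longleftrightarrow>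
     DBs = {v. \<exists>w. \<forall>u\<in>DB. inner (B u) v = inner u w} \<and>
     (\<forall>v\<in>DBs. \<forall>u\<in>DB. inner (B u) v = inner u (Bs v))"

text \<open>z belongs to H^1(0,1;H1) with (weak) derivative z': z' is square
  integrable on [0,1] and z is its primitive.\<close>
definition H1_pair :: "(real \<Rightarrow> 'a::real_normed_vector) \<Rightarrow> (real \<Rightarrow> 'a) \<Rightarrow> bool" where
  "H1_pair z z' \<longleftrightarrow> (\<lambda>s. (norm (z' s))\<^sup>2) integrable_on {0..1} \<and>
     (\<forall>\<rho>\<in>{0..1}. (z' has_integral (z \<rho> - z 0)) {0..\<rho>})"

text \<open>Domain of the operator A; an element is (u, v, z, z') with z' the
  derivative of z.\<close>
definition domA ::
  "'h1 set \<Rightarrow> ('h1 \<Rightarrow> 'h) \<Rightarrow> 'h set \<Rightarrow> ('h \<Rightarrow> 'h1) \<Rightarrow> real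
     \<Rightarrow> ('h \<times> 'h \<times> (real \<Rightarrow> 'h1::real_normed_vector) \<times> (real \<Rightarrow> 'h1)) set" where
  "domA DB B DBs Bs a = {(u, v, z, z'). u \<in> DBs \<and> v \<in> DBs \<and> H1_pair z z' \<and>
      a *\<^sub>R Bs v + z 1 \<in> DB \<and> Bs u = z 0}"

definition opA ::
  "('h1 \<Rightarrow> 'h::real_vector) \<Rightarrow> ('h \<Rightarrow> 'h1::real_vector) \<Rightarrow> real \<Rightarrow> real
     \<Rightarrow> ('h \<times> 'h \<times> (real \<Rightarrow> 'h1) \<times> (real \<Rightarrow> 'h1)) \<Rightarrow> ('h \<times> 'h \<times> (real \<Rightarrow> 'h1))" where
  "opA B Bs a \<tau> U = (case U of (u, v, z, z') \<Rightarrow>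
      (v, - B (a *\<^sub>R Bs v + z 1), (\<lambda>s. - (1 / \<tau>) *\<^sub>R z' s)))"

text \<open>Equality in the state space D(B*) x H x L^2(0,1;H1)
  (third component up to null sets).\<close>
definition st_eq :: "('h \<times> 'h \<times> (real \<Rightarrow> 'h1)) \<Rightarrow> ('h \<times> 'h \<times> (real \<Rightarrow> 'h1)) \<Rightarrow> bool" where
  "st_eq X Y = (case X of (u, v, f) \<Rightarrow> case Y of (u', v', g) \<Rightarrow>
      u = u' \<and> v = v' \<and> (AE s in lborel. s \<in> {0..1} \<longrightarrow> f s = g s))"

definition st_zero :: "'h::zero \<times> 'h \<times> (real \<Rightarrow> 'h1::zero) \<Rightarrow> bool" where
  "st_zero X = st_eq X (0, 0, (\<lambda>_. 0))"

definition st_lin :: "real \<Rightarrow> ('h::real_vector \<times> 'h \<times> (real \<Rightarrow> 'h1::real_vector))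
     \<Rightarrow> real \<Rightarrow> ('h \<times> 'h \<times> (real \<Rightarrow> 'h1)) \<Rightarrow> ('h \<times> 'h \<times> (real \<Rightarrow> 'h1))" where
  "st_lin c X d Y = (case X of (u, v, f) \<Rightarrow> case Y of (u', v', g) \<Rightarrow>
      (c *\<^sub>R u + d *\<^sub>R u', c *\<^sub>R v + d *\<^sub>R v', (\<lambda>s. c *\<^sub>R f s + d *\<^sub>R g s)))"

definition st_of :: "'h \<times> 'h \<times> (real \<Rightarrow> 'h1) \<times> (real \<Rightarrow> 'h1) \<Rightarrow> 'h \<times> 'h \<times> (real \<Rightarrow> 'h1)" where
  "st_of U = (case U of (u, v, z, z') \<Rightarrow> (u, v, z))"

text \<open>lambda = alpha + i beta is an eigenvalue of (the complexification of) A: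
  there is a nonzero U = U1 + i U2 with U1, U2 in D(A) and A U = lambda U.\<close>
definition is_eigenvalue_A ::
  "'h1::real_normed_vector set \<Rightarrow> ('h1 \<Rightarrow> 'h::real_normed_vector) \<Rightarrow> 'h set \<Rightarrow> ('h \<Rightarrow> 'h1)
     \<Rightarrow> real \<Rightarrow> real \<Rightarrow> complex \<Rightarrow> bool" where
  "is_eigenvalue_A DB B DBs Bs a \<tau> lam \<longleftrightarrow>
     (\<exists>U1 U2. U1 \<in> domA DB B DBs Bs a \<and> U2 \<in> domA DB B DBs Bs a \<and>
        \<not> (st_zero (st_of U1) \<and> st_zero (st_of U2)) \<and>
        st_eq (opA B Bs a \<tau> U1) (st_lin (Re lam) (st_of U1) (- Im lam) (st_of U2)) \<and>
        st_eq (opA B Bs a \<tau> U2) (st_lin (Im lam) (st_of U1) (Re lam) (st_of U2)))"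

end

theory Submission
  imports Defs
begin

lemma ae_spike_set:
  assumes "AE s in lborel. P s"
  obtains N where "negligible N" "\<And>s. s \<notin> N \<Longrightarrow> P s"
proof -
  from assms obtain N where N: "N \<in> null_sets lborel" "{x \<in> space lborel. \<not> P x} \<subseteq> N"
    by (auto simp: eventually_ae_filter)
  have "negligible N" using N(1)
    by (simp add: negligible_iff_null_sets null_sets_completionI)
  with N(2) show ?thesis using that by auto
qed


lemma ode2:
  fixes X Y X' Y' :: "real \<Rightarrow> real"
  assumes hX: "\<forall>\<rho>\<in>{0..1}. (X' has_integral X \<rho> - X 0) {0..\<rho>}"
    and hY: "\<forall>\<rho>\<in>{0..1}. (Y' has_integral Y \<rho> - Y 0) {0..\<rho>}"
    and ae: "AE s in lborel. s \<in> {0..1} \<longrightarrow> X' s = -\<tau>*(\<alpha>*X s - \<beta>*Y s) \<and> Y' s = -\<tau>*(\<beta>*X s + \<alpha>*Y s)"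
  shows "continuous_on {0..1} X" "continuous_on {0..1} Y"
    "\<forall>\<rho>\<in>{0..1}. ((\<lambda>s. -\<tau>*(\<alpha>*X s - \<beta>*Y s)) has_integral X \<rho> - X 0) {0..\<rho>}"
    "\<forall>\<rho>\<in>{0..1}. ((\<lambda>s. -\<tau>*(\<beta>*X s + \<alpha>*Y s)) has_integral Y \<rho> - Y 0) {0..\<rho>}"
proof -
  have cont: "continuous_on {0..1} Z"
    if h: "\<forall>\<rho>\<in>{0..1}. (Z' has_integral Z \<rho> - Z 0) {0..\<rho>}" for Z Z' :: "real \<Rightarrow> real"
  proof -
    have int: "Z' integrable_on {0..1}" using h by auto
    have eq: "Z \<rho> = Z 0 + integral {0..\<rho>} Z'" if "\<rho> \<in> {0..1}" for \<rho>
    proof -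
      have "integral {0..\<rho>} Z' = Z \<rho> - Z 0" using h that by (simp add: integral_unique)
      then show ?thesis by simp
    qed
    have "continuous_on {0..1} (\<lambda>\<rho>. Z 0 + integral {0..\<rho>} Z')"
      by (intro continuous_on_add continuous_on_const indefinite_integral_continuous_1 int)
    then show ?thesis
    proof (rule continuous_on_eq)
      fix x :: real assume "x \<in> {0..1}"
      from eq[OF this] show "Z 0 + integral {0..x} Z' = Z x" by (rule sym)
    qed
  qed
  show "continuous_on {0..1} X" using cont[OF hX] .
  show "continuous_on {0..1} Y" using cont[OF hY] .
  obtain N where N: "negligible N" "\<And>s. s \<notin> N \<Longrightarrow> s \<in> {0..1} \<longrightarrow> X' s = -\<tau>*(\<alpha>*X s - \<beta>*Y s) \<and> Y' s = -\<tau>*(\<beta>*X s + \<alpha>*Y s)"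
    using ae_spike_set[OF ae] by blast
  show "\<forall>\<rho>\<in>{0..1}. ((\<lambda>s. -\<tau>*(\<alpha>*X s - \<beta>*Y s)) has_integral X \<rho> - X 0) {0..\<rho>}"
  proof
    fix \<rho> :: real assume r: "\<rho> \<in> {0..1}"
    show "((\<lambda>s. -\<tau>*(\<alpha>*X s - \<beta>*Y s)) has_integral X \<rho> - X 0) {0..\<rho>}"
      by (rule has_integral_spike[OF N(1) _ hX[rule_format, OF r]]) (use N(2) r in auto)
  qed
  show "\<forall>\<rho>\<in>{0..1}. ((\<lambda>s. -\<tau>*(\<beta>*X s + \<alpha>*Y s)) has_integral Y \<rho> - Y 0) {0..\<rho>}"
  proof
    fix \<rho> :: real assume r: "\<rho> \<in> {0..1}"
    show "((\<lambda>s. -\<tau>*(\<beta>*X s + \<alpha>*Y s)) has_integral Y \<rho> - Y 0) {0..\<rho>}"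
      by (rule has_integral_spike[OF N(1) _ hY[rule_format, OF r]]) (use N(2) r in auto)
  qed
qed

lemma decay:
  fixes X Y :: "real \<Rightarrow> real"
  assumes cX: "continuous_on {0..1} X" and cY: "continuous_on {0..1} Y"
    and gX: "\<forall>\<rho>\<in>{0..1}. ((\<lambda>s. -\<tau>*(\<alpha>*X s - \<beta>*Y s)) has_integral X \<rho> - X 0) {0..\<rho>}"
    and gY: "\<forall>\<rho>\<in>{0..1}. ((\<lambda>s. -\<tau>*(\<beta>*X s + \<alpha>*Y s)) has_integral Y \<rho> - Y 0) {0..\<rho>}"
    and al: "\<alpha> \<ge> 0" and tau: "\<tau> > 0"
    and r: "\<rho> \<in> {0..1}"
  shows "(X \<rho>)^2 + (Y \<rho>)^2 \<le> (X 0)^2 + (Y 0)^2"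
proof -
  define GX where "GX = (\<lambda>s. -\<tau>*(\<alpha>*X s - \<beta>*Y s))"
  define GY where "GY = (\<lambda>s. -\<tau>*(\<beta>*X s + \<alpha>*Y s))"
  have cGX: "continuous_on {0..1} GX" unfolding GX_def
    by (intro continuous_intros cX cY)
  have cGY: "continuous_on {0..1} GY" unfolding GY_def
    by (intro continuous_intros cX cY)
  have dv: "(Z has_vector_derivative G x) (at x within {0..1})"
    if x: "x \<in> {0..1}" and cG: "continuous_on {0..1} G"
      and h: "\<forall>\<rho>\<in>{0..1}. (G has_integral Z \<rho> - Z 0) {0..\<rho>}" for Z G :: "real \<Rightarrow> real" and x
  proof -
    have eq: "Z y = Z 0 + integral {0..y} G" if "y \<in> {0..1}" for y
    proof -
      have "integral {0..y} G = Z y - Z 0" using h that by (simp add: integral_unique)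
      then show ?thesis by simp
    qed
    have "((\<lambda>u. integral {0..u} G) has_vector_derivative G x) (at x within {0..1})"
      by (rule integral_has_vector_derivative[OF cG x])
    then have "((\<lambda>u. Z 0 + integral {0..u} G) has_vector_derivative G x) (at x within {0..1})"
      using has_vector_derivative_add_const[of "\<lambda>u. integral {0..u} G" "Z 0"] by (simp add: add.commute)
    then show ?thesis
      using has_vector_derivative_transform[where f="\<lambda>u. Z 0 + integral {0..u} G" and g=Z, OF x] eq by blast
  qed
  define E where "E = (\<lambda>s. X s * X s + Y s * Y s)"
  define E' where "E' = (\<lambda>s. X s * GX s + GX s * X s + (Y s * GY s + GY s * Y s))"
  have dE: "(E has_vector_derivative E' x) (at x within {0..1})" if x: "x \<in> {0..1}" for x
  proof -
    have 1: "(X has_vector_derivative GX x) (at x within {0..1})"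
      by (rule dv[OF x cGX]) (use gX in \<open>simp add: GX_def\<close>)
    have 2: "(Y has_vector_derivative GY x) (at x within {0..1})"
      by (rule dv[OF x cGY]) (use gY in \<open>simp add: GY_def\<close>)
    show ?thesis unfolding E_def E'_def
      by (intro has_vector_derivative_add has_vector_derivative_mult 1 2)
  qed
  have r01: "{0..\<rho>} \<subseteq> {0..1}" using r by auto
  have "(E' has_integral E \<rho> - E 0) {0..\<rho>}"
  proof (rule fundamental_theorem_of_calculus)
    show "0 \<le> \<rho>" using r by simp
    fix x assume x: "x \<in> {0..\<rho>}"
    then have "x \<in> {0..1}" using r01 by blast
    from has_vector_derivative_within_subset[OF dE[OF this] r01]
    show "(E has_vector_derivative E' x) (at x within {0..\<rho>})" .
  qed
  moreover have "E' s \<le> 0" for s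
  proof -
    have "E' s = -2*\<tau>*\<alpha>*(X s * X s + Y s * Y s)" unfolding E'_def GX_def GY_def by algebra
    moreover have "0 \<le> \<tau>*\<alpha>*(X s * X s + Y s * Y s)" using al tau by (intro mult_nonneg_nonneg) auto
    ultimately show ?thesis by linarith
  qed
  ultimately have "E \<rho> - E 0 \<le> 0"
    using has_integral_le[of E' "E \<rho> - E 0" "{0..\<rho>}" "\<lambda>_. 0" 0] by auto
  then show ?thesis unfolding E_def by (simp add: power2_eq_square)
qed


lemma proj:
  fixes z1 z2 z1' z2' :: "real \<Rightarrow> 'h1::real_inner" and c1 c2 :: 'h1
  assumes H1: "H1_pair z1 z1'" "H1_pair z2 z2'"
    and ae1: "AE s in lborel. s \<in> {0..1} \<longrightarrow> -(1/\<tau>) *\<^sub>R z1' s = \<alpha> *\<^sub>R z1 s + (-\<beta>) *\<^sub>R z2 s"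
    and ae2: "AE s in lborel. s \<in> {0..1} \<longrightarrow> -(1/\<tau>) *\<^sub>R z2' s = \<beta> *\<^sub>R z1 s + \<alpha> *\<^sub>R z2 s"
    and tau: "\<tau> > 0"
    and Xd: "X = (\<lambda>s. inner (z1 s) c1 + inner (z2 s) c2)"
    and Yd: "Y = (\<lambda>s. inner (z2 s) c1 - inner (z1 s) c2)"
  shows "\<forall>\<rho>\<in>{0..1}. ((\<lambda>s. inner (z1' s) c1 + inner (z2' s) c2) has_integral X \<rho> - X 0) {0..\<rho>}"
    "\<forall>\<rho>\<in>{0..1}. ((\<lambda>s. inner (z2' s) c1 - inner (z1' s) c2) has_integral Y \<rho> - Y 0) {0..\<rho>}"
    "AE s in lborel. s \<in> {0..1} \<longrightarrow> (inner (z1' s) c1 + inner (z2' s) c2) = -\<tau>*(\<alpha>*X s - \<beta>*Y s) \<and>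
         (inner (z2' s) c1 - inner (z1' s) c2) = -\<tau>*(\<beta>*X s + \<alpha>*Y s)"
proof -
  have h1: "\<forall>\<rho>\<in>{0..1}. (z1' has_integral (z1 \<rho> - z1 0)) {0..\<rho>}"
    using H1(1) by (simp add: H1_pair_def)
  have h2: "\<forall>\<rho>\<in>{0..1}. (z2' has_integral (z2 \<rho> - z2 0)) {0..\<rho>}"
    using H1(2) by (simp add: H1_pair_def)
  have pr: "((\<lambda>s. inner (f s) c) has_integral inner y c) S"
    if "(f has_integral y) S" for f :: "real \<Rightarrow> 'h1" and y c S
    using has_integral_linear[OF that bounded_linear_inner_left[of c]] by (simp add: o_def)
  show "\<forall>\<rho>\<in>{0..1}. ((\<lambda>s. inner (z1' s) c1 + inner (z2' s) c2) has_integral X \<rho> - X 0) {0..\<rho>}"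
  proof
    fix \<rho> :: real assume r: "\<rho> \<in> {0..1}"
    have "((\<lambda>s. inner (z1' s) c1 + inner (z2' s) c2) has_integral inner (z1 \<rho> - z1 0) c1 + inner (z2 \<rho> - z2 0) c2) {0..\<rho>}"
      by (intro has_integral_add pr h1[rule_format, OF r] h2[rule_format, OF r])
    then show "((\<lambda>s. inner (z1' s) c1 + inner (z2' s) c2) has_integral X \<rho> - X 0) {0..\<rho>}"
      unfolding Xd by (simp add: inner_diff_left algebra_simps)
  qed
  show "\<forall>\<rho>\<in>{0..1}. ((\<lambda>s. inner (z2' s) c1 - inner (z1' s) c2) has_integral Y \<rho> - Y 0) {0..\<rho>}"
  proof
    fix \<rho> :: real assume r: "\<rho> \<in> {0..1}"
    have "((\<lambda>s. inner (z2' s) c1 - inner (z1' s) c2) has_integral inner (z2 \<rho> - z2 0) c1 - inner (z1 \<rho> - z1 0) c2) {0..\<rho>}"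
      by (intro has_integral_diff pr h1[rule_format, OF r] h2[rule_format, OF r])
    then show "((\<lambda>s. inner (z2' s) c1 - inner (z1' s) c2) has_integral Y \<rho> - Y 0) {0..\<rho>}"
      unfolding Yd by (simp add: inner_diff_left algebra_simps)
  qed
  show "AE s in lborel. s \<in> {0..1} \<longrightarrow> (inner (z1' s) c1 + inner (z2' s) c2) = -\<tau>*(\<alpha>*X s - \<beta>*Y s) \<and>
         (inner (z2' s) c1 - inner (z1' s) c2) = -\<tau>*(\<beta>*X s + \<alpha>*Y s)"
    using ae1 ae2
  proof eventually_elim
    case (elim s)
    show ?case
    proof
      assume s: "s \<in> {0..1}"
      have e1: "z1' s = (-\<tau>) *\<^sub>R (\<alpha> *\<^sub>R z1 s + (-\<beta>) *\<^sub>R z2 s)"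
      proof -
        have "(-\<tau>) *\<^sub>R (-(1/\<tau>) *\<^sub>R z1' s) = (-\<tau>) *\<^sub>R (\<alpha> *\<^sub>R z1 s + (-\<beta>) *\<^sub>R z2 s)" using elim s by simp
        then show ?thesis using tau by simp
      qed
      have e2: "z2' s = (-\<tau>) *\<^sub>R (\<beta> *\<^sub>R z1 s + \<alpha> *\<^sub>R z2 s)"
      proof -
        have "(-\<tau>) *\<^sub>R (-(1/\<tau>) *\<^sub>R z2' s) = (-\<tau>) *\<^sub>R (\<beta> *\<^sub>R z1 s + \<alpha> *\<^sub>R z2 s)" using elim s by simp
        then show ?thesis using tau by simp
      qed
      show "(inner (z1' s) c1 + inner (z2' s) c2) = -\<tau>*(\<alpha>*X s - \<beta>*Y s) \<and>
         (inner (z2' s) c1 - inner (z1' s) c2) = -\<tau>*(\<beta>*X s + \<alpha>*Y s)"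
        unfolding e1 e2 Xd Yd by (simp add: inner_add_left inner_diff_left algebra_simps)
    qed
  qed
qed

theorem lemma3p1:
  fixes DB :: "'h1::{real_inner, complete_space} set"
    and B :: "'h1 \<Rightarrow> 'h::{real_inner, complete_space}"
    and DBs :: "'h set" and Bs :: "'h \<Rightarrow> 'h1"
    and C a \<tau> :: real and lam :: complex
  assumes B_lin: "lin_op DB B"
    and B_dense: "closure DB = UNIV"
    and adj: "is_adjoint DB B DBs Bs"
    and C_pos: "C > 0"
    and coercive: "\<forall>v\<in>DBs. norm (Bs v) \<ge> C * norm v"
    and V_complete: "\<forall>X. (\<forall>n. X n \<in> DBs) \<and>
        (\<forall>e>0. \<exists>N. \<forall>m\<ge>N. \<forall>n\<ge>N. norm (Bs (X m - X n)) < e)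
        \<longrightarrow> (\<exists>x\<in>DBs. (\<lambda>n. norm (Bs (X n - x))) \<longlonglongrightarrow> 0)"
    and V_compact: "\<forall>X::nat \<Rightarrow> 'h. (\<forall>n. X n \<in> DBs) \<and> (\<exists>M. \<forall>n. norm (Bs (X n)) \<le> M)
        \<longrightarrow> (\<exists>r x. strict_mono r \<and> (X \<circ> r) \<longlonglongrightarrow> x)"
    and a_pos: "a > 0" and tau_pos: "\<tau> > 0" and tau_le: "\<tau> \<le> a"
    and eig: "is_eigenvalue_A DB B DBs Bs a \<tau> lam"
  shows "Re lam < 0"
proof -
  define \<alpha> where "\<alpha> = Re lam"
  define \<beta> where "\<beta> = Im lam"
  obtain U1 U2 where dom1: "U1 \<in> domA DB B DBs Bs a" and dom2: "U2 \<in> domA DB B DBs Bs a"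
    and nz: "\<not> (st_zero (st_of U1) \<and> st_zero (st_of U2))"
    and e1: "st_eq (opA B Bs a \<tau> U1) (st_lin \<alpha> (st_of U1) (- \<beta>) (st_of U2))"
    and e2: "st_eq (opA B Bs a \<tau> U2) (st_lin \<beta> (st_of U1) \<alpha> (st_of U2))"
    using eig unfolding is_eigenvalue_A_def \<alpha>_def \<beta>_def by blast
  obtain u1 v1 z1 z1' where U1: "U1 = (u1, v1, z1, z1')" by (cases U1) auto
  obtain u2 v2 z2 z2' where U2: "U2 = (u2, v2, z2, z2')" by (cases U2) auto
  have u1: "u1 \<in> DBs" and v1: "v1 \<in> DBs" and H1: "H1_pair z1 z1'"
    and w1D: "a *\<^sub>R Bs v1 + z1 1 \<in> DB" and p1: "Bs u1 = z1 0"
    using dom1 unfolding U1 domA_def by auto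
  have u2: "u2 \<in> DBs" and v2: "v2 \<in> DBs" and H2: "H1_pair z2 z2'"
    and w2D: "a *\<^sub>R Bs v2 + z2 1 \<in> DB" and p2: "Bs u2 = z2 0"
    using dom2 unfolding U2 domA_def by auto
  have v1e: "v1 = \<alpha> *\<^sub>R u1 + (-\<beta>) *\<^sub>R u2"
    and Bw1: "- B (a *\<^sub>R Bs v1 + z1 1) = \<alpha> *\<^sub>R v1 + (-\<beta>) *\<^sub>R v2"
    and ae1: "AE s in lborel. s \<in> {0..1} \<longrightarrow> -(1/\<tau>) *\<^sub>R z1' s = \<alpha> *\<^sub>R z1 s + (-\<beta>) *\<^sub>R z2 s"
    using e1 unfolding U1 U2 st_eq_def opA_def st_lin_def st_of_def by auto
  have v2e: "v2 = \<beta> *\<^sub>R u1 + \<alpha> *\<^sub>R u2"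
    and Bw2: "- B (a *\<^sub>R Bs v2 + z2 1) = \<beta> *\<^sub>R v1 + \<alpha> *\<^sub>R v2"
    and ae2: "AE s in lborel. s \<in> {0..1} \<longrightarrow> -(1/\<tau>) *\<^sub>R z2' s = \<beta> *\<^sub>R z1 s + \<alpha> *\<^sub>R z2 s"
    using e2 unfolding U1 U2 st_eq_def opA_def st_lin_def st_of_def by auto
  have nz': "\<not> ((u1 = 0 \<and> v1 = 0 \<and> (AE s in lborel. s \<in> {0..1} \<longrightarrow> z1 s = 0)) \<and>
               (u2 = 0 \<and> v2 = 0 \<and> (AE s in lborel. s \<in> {0..1} \<longrightarrow> z2 s = 0)))"
    using nz unfolding U1 U2 st_zero_def st_eq_def st_of_def by auto
  have adjE: "\<And>v u. v \<in> DBs \<Longrightarrow> u \<in> DB \<Longrightarrow> inner (B u) v = inner u (Bs v)"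
    using adj unfolding is_adjoint_def by blast
  have dense: "x = y" if h: "\<And>u. u \<in> DB \<Longrightarrow> inner u x = inner u y" for x y :: 'h1
  proof -
    have "continuous_on (closure DB) (\<lambda>u. inner u (x - y))" by (intro continuous_intros)
    moreover have "\<And>u. u \<in> DB \<Longrightarrow> inner u (x - y) = 0" using h by (simp add: inner_diff_right)
    ultimately have "inner (x - y) (x - y) = 0"
      using continuous_constant_on_closure[of DB "\<lambda>u. inner u (x - y)" 0 "x - y"] B_dense by auto
    then show ?thesis by simp
  qed
  define p1 where "p1 = z1 0"
  define p2 where "p2 = z2 0"
  define q1 where "q1 = z1 1"
  define q2 where "q2 = z2 1"
  have Bsv1: "Bs v1 = \<alpha> *\<^sub>R p1 - \<beta> *\<^sub>R p2"
  proof (rule dense)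
    fix u assume u: "u \<in> DB"
    have "inner u (Bs v1) = inner (B u) v1" using adjE[OF v1 u] by simp
    also have "\<dots> = \<alpha> * inner (B u) u1 - \<beta> * inner (B u) u2" unfolding v1e by (simp add: inner_add_right inner_diff_right)
    also have "\<dots> = inner u (\<alpha> *\<^sub>R p1 - \<beta> *\<^sub>R p2)"
      using adjE[OF u1 u] adjE[OF u2 u] p1 p2 unfolding p1_def p2_def by (simp add: inner_diff_right)
    finally show "inner u (Bs v1) = inner u (\<alpha> *\<^sub>R p1 - \<beta> *\<^sub>R p2)" .
  qed
  have Bsv2: "Bs v2 = \<beta> *\<^sub>R p1 + \<alpha> *\<^sub>R p2"
  proof (rule dense)
    fix u assume u: "u \<in> DB"
    have "inner u (Bs v2) = inner (B u) v2" using adjE[OF v2 u] by simp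
    also have "\<dots> = \<beta> * inner (B u) u1 + \<alpha> * inner (B u) u2" unfolding v2e by (simp add: inner_add_right)
    also have "\<dots> = inner u (\<beta> *\<^sub>R p1 + \<alpha> *\<^sub>R p2)"
      using adjE[OF u1 u] adjE[OF u2 u] p1 p2 unfolding p1_def p2_def by (simp add: inner_add_right)
    finally show "inner u (Bs v2) = inner u (\<beta> *\<^sub>R p1 + \<alpha> *\<^sub>R p2)" .
  qed
  define w1 where "w1 = a *\<^sub>R Bs v1 + z1 1"
  define w2 where "w2 = a *\<^sub>R Bs v2 + z2 1"
  have F11: "inner (B w1) u1 = inner w1 p1" using adjE[OF u1 w1D] p1 unfolding w1_def p1_def by simp
  have F12: "inner (B w1) u2 = inner w1 p2" using adjE[OF u2 w1D] p2 unfolding w1_def p2_def by simp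
  have F21: "inner (B w2) u1 = inner w2 p1" using adjE[OF u1 w2D] p1 unfolding w2_def p1_def by simp
  have F22: "inner (B w2) u2 = inner w2 p2" using adjE[OF u2 w2D] p2 unfolding w2_def p2_def by simp
  have Bw1': "B w1 = - (\<alpha> *\<^sub>R v1 + (-\<beta>) *\<^sub>R v2)" using Bw1 unfolding w1_def by (simp add: minus_equation_iff)
  have Bw2': "B w2 = - (\<beta> *\<^sub>R v1 + \<alpha> *\<^sub>R v2)" using Bw2 unfolding w2_def by (simp add: minus_equation_iff)
  have w1e: "w1 = (a*\<alpha>) *\<^sub>R p1 - (a*\<beta>) *\<^sub>R p2 + q1" unfolding w1_def Bsv1 q1_def by (simp add: algebra_simps)
  have w2e: "w2 = (a*\<beta>) *\<^sub>R p1 + (a*\<alpha>) *\<^sub>R p2 + q2" unfolding w2_def Bsv2 q2_def by (simp add: algebra_simps)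
  define U where "U = inner u1 u1 + inner u2 u2"
  define P where "P = inner p1 p1 + inner p2 p2"
  define L where "L = \<alpha>^2 + \<beta>^2"
  define S where "S = (\<lambda>s. inner (z1 s) p1 + inner (z2 s) p2)"
  define T where "T = (\<lambda>s. inner (z2 s) p1 - inner (z1 s) p2)"
  have lhs: "\<alpha>*(inner (B w1) u1 + inner (B w2) u2) + \<beta>*(inner (B w2) u1 - inner (B w1) u2) = - L*\<alpha>*U"
    unfolding Bw1' Bw2' v1e v2e L_def U_def
    by (simp add: inner_add_left inner_add_right inner_diff_left inner_diff_right inner_commute[of u2 u1] algebra_simps power2_eq_square)
  have rhs: "\<alpha>*(inner w1 p1 + inner w2 p2) + \<beta>*(inner w2 p1 - inner w1 p2) = a*L*P + \<alpha> * S 1 + \<beta> * T 1"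
    unfolding w1e w2e L_def P_def S_def T_def q1_def q2_def
    by (simp add: inner_add_left inner_add_right inner_diff_left inner_diff_right inner_commute[of p2 p1] algebra_simps power2_eq_square)
  have star: "- L*\<alpha>*U = a*L*P + \<alpha> * S 1 + \<beta> * T 1"
    using lhs rhs F11 F12 F21 F22 by simp
  show ?thesis
  proof (rule ccontr)
    assume "\<not> Re lam < 0"
    then have al: "\<alpha> \<ge> 0" unfolding \<alpha>_def by simp
    have tau0: "\<tau> > 0" using tau_pos .
    have P0: "P \<ge> 0" unfolding P_def by simp
    have L0: "L \<ge> 0" unfolding L_def by simp
    have U0: "U \<ge> 0" unfolding U_def by simp
    note pj = proj[OF H1 H2 ae1 ae2 tau_pos]
    note oS = ode2[OF pj(1,2,3)[OF S_def T_def]]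
    have S0: "S 0 = P" unfolding S_def P_def p1_def p2_def by simp
    have T0: "T 0 = 0" unfolding T_def p1_def p2_def by (simp add: inner_commute)
    have dST: "(S \<rho>)^2 + (T \<rho>)^2 \<le> P^2" if r: "\<rho> \<in> {0..1}" for \<rho>
      using decay[OF oS al tau0 r] S0 T0 by simp
    have SleP: "S \<rho> \<le> P" if r: "\<rho> \<in> {0..1}" for \<rho>
    proof -
      have "(S \<rho>)^2 \<le> P^2" using dST[OF r] by (smt (verit) zero_le_power2)
      then show ?thesis using P0 power2_le_imp_le by blast
    qed
    define IS where "IS = integral {0..1} S"
    define IT where "IT = integral {0..1} T"
    have iS: "(S has_integral IS) {0..1}" unfolding IS_def
      using oS(1) integrable_continuous_real integrable_integral by blast
    have iT: "(T has_integral IT) {0..1}" unfolding IT_def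
      using oS(2) integrable_continuous_real integrable_integral by blast
    have gS1: "((\<lambda>s. -\<tau>*(\<alpha>*S s - \<beta>*T s)) has_integral -\<tau>*(\<alpha>*IS - \<beta>*IT)) {0..1}"
      by (intro has_integral_mult_right has_integral_diff iS iT)
    have gT1: "((\<lambda>s. -\<tau>*(\<beta>*S s + \<alpha>*T s)) has_integral -\<tau>*(\<beta>*IS + \<alpha>*IT)) {0..1}"
      by (intro has_integral_mult_right has_integral_add iS iT)
    have S1: "S 1 - P = -\<tau>*(\<alpha>*IS - \<beta>*IT)"
      using has_integral_unique[OF oS(3)[rule_format, of 1] gS1] S0 by simp
    have T1: "T 1 = -\<tau>*(\<beta>*IS + \<alpha>*IT)"
      using has_integral_unique[OF oS(4)[rule_format, of 1] gT1] T0 by simp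
    have ISle: "IS \<le> P"
      using has_integral_le[OF iS has_integral_const_real[of P 0 1]] SleP by auto
    have s1': "S 1 = P - \<tau>*(\<alpha>*IS - \<beta>*IT)" using S1 by simp
    have comb: "\<alpha> * S 1 + \<beta> * T 1 = \<alpha>*P - \<tau>*L*IS"
      unfolding s1' T1 L_def by (simp add: algebra_simps power2_eq_square)
    have main: "L*\<alpha>*U + (a-\<tau>)*L*P + \<tau>*L*(P-IS) + \<alpha>*P = 0"
      using star comb by (simp add: algebra_simps)
    have t1: "0 \<le> L*\<alpha>*U" using L0 al U0 by simp
    have t2: "0 \<le> (a-\<tau>)*L*P" using tau_le L0 P0 by simp
    have t3: "0 \<le> \<tau>*L*(P-IS)" using tau0 L0 ISle by simp
    have t4: "0 \<le> \<alpha>*P" using al P0 by simp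
    have aP: "\<alpha>*P = 0" using main t1 t2 t3 t4 by linarith
    show False
    proof (cases "P = 0")
      case True
      then have pp1: "p1 = 0" and pp2: "p2 = 0" unfolding P_def
        by (metis add_nonneg_eq_0_iff inner_eq_zero_iff inner_ge_zero)+
      have uz: "u = 0" if "u \<in> DBs" "Bs u = 0" for u
      proof -
        have "C * norm u \<le> 0" using coercive that by force
        then have "norm u \<le> 0" using C_pos by (simp add: mult_le_0_iff)
        then show ?thesis by simp
      qed
      have uu1: "u1 = 0" using uz[OF u1] p1 pp1 unfolding p1_def by simp
      have uu2: "u2 = 0" using uz[OF u2] p2 pp2 unfolding p2_def by simp
      have vv1: "v1 = 0" using v1e uu1 uu2 by simp
      have vv2: "v2 = 0" using v2e uu1 uu2 by simp
      have zz: "inner (z1 \<rho>) c = 0 \<and> inner (z2 \<rho>) c = 0" if r: "\<rho> \<in> {0..1}" for \<rho> c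
      proof -
        define X where "X = (\<lambda>s. inner (z1 s) c + inner (z2 s) 0)"
        define Y where "Y = (\<lambda>s. inner (z2 s) c - inner (z1 s) 0)"
        note pc = proj[OF H1 H2 ae1 ae2 tau_pos X_def Y_def]
        note oc = ode2[OF pc]
        have "(X \<rho>)^2 + (Y \<rho>)^2 \<le> (X 0)^2 + (Y 0)^2" using decay[OF oc al tau0 r] .
        moreover have "X 0 = 0" "Y 0 = 0" unfolding X_def Y_def using pp1 pp2 unfolding p1_def p2_def by auto
        ultimately have "(X \<rho>)^2 + (Y \<rho>)^2 \<le> 0" by simp
        then have "X \<rho> = 0" "Y \<rho> = 0" by (smt (verit) zero_le_power2 zero_eq_power2)+
        then show ?thesis unfolding X_def Y_def by simp
      qed
      have "z1 \<rho> = 0 \<and> z2 \<rho> = 0" if "\<rho> \<in> {0..1}" for \<rho>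
        using zz[OF that, of "z1 \<rho>"] zz[OF that, of "z2 \<rho>"] by simp
      then show False using nz' uu1 uu2 vv1 vv2 by (auto intro!: AE_I2)
    next
      case False
      then have Ppos: "P > 0" using P0 by simp
      have a0: "\<alpha> = 0" using aP Ppos by simp
      show False
      proof (cases "\<beta> = 0")
        case True
        have "S 1 = P" using S1 a0 True by simp
        moreover have "inner (B w1) u1 + inner (B w2) u2 = 0" unfolding Bw1' Bw2' using a0 True by simp
        moreover have "inner w1 p1 + inner w2 p2 = S 1"
          unfolding w1e w2e S_def q1_def q2_def using a0 True by simp
        ultimately show False using F11 F22 Ppos by simp
      next
        case False
        have Lpos: "L > 0" unfolding L_def using False by (simp add: sum_power2_gt_zero_iff)
        have "L*(a*P - \<tau>*IS) = 0" using main a0 by (simp add: algebra_simps)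
        then have "a*P = \<tau>*IS" using Lpos by simp
        then have "\<tau>*P \<le> \<tau>*IS" using tau_le P0 by (smt (verit) mult_right_mono)
        then have "P \<le> IS" using tau0 by simp
        then have ISP: "IS = P" using ISle by simp
        have i0: "((\<lambda>s. P - S s) has_integral 0) (cbox 0 (1::real))"
          using has_integral_diff[OF has_integral_const_real[of P 0 1] iS] ISP by simp
        have SP: "S s = P" if s: "s \<in> {0..1}" for s
        proof -
          have "(\<lambda>s. P - S s) s = 0"
            by (rule has_integral_0_cbox_imp_0[OF _ _ i0])
              (use s SleP oS(1) in \<open>auto intro!: continuous_intros simp: cbox_interval\<close>)
          then show ?thesis by simp
        qed
        have "T 1 = 0"
        proof -
          have "(T 1)^2 \<le> 0" using dST[of 1] SP[of 1] by simp
          then show ?thesis by (smt (verit) zero_le_power2 zero_eq_power2)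
        qed
        then have "\<tau>*\<beta>*P = 0" using T1 a0 ISP by simp
        then show False using tau0 False Ppos by simp
      qed
    qed
  qed
qed

end
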